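(* Let $N$ be a nontrivial normal subgroup of $G_2$. If $\phi(N)$ is trivial, then $N=K$.
   Context: The $2\times2\times2$ Rubik's cube consists of 8 corner cubelets, each carrying 3 colored stickers. Corner positions are numbered 1 = top-front-left, 2 = top-front-right, 3 = top-back-left, 4 = top-back-right, 5 = bottom-front-left, 6 = bottom-front-right, 7 = bottom-back-left, 8 = bottom-back-right. $G_2$ is the subgroup of the symmetric group on the 24 stickers generated by the six moves $u,d,f,b,l,r$ rotating respectively the top, bottom, front, back, left, right layer of four cubelets by $90^\circ$ clockwise as seen from outside facing that face. $\phi:G_2\to S_8$ records the permutation of corner positions, and $K=\ker\phi$. *)

theory Defs
  imports "HOL-Algebra.Algebra"
begin

datatype face = Up | Dn | Fr | Bk | Lf | Rt

fun cfaces :: "nat \<Rightarrow> face set" where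
  "cfaces c =
    (if c = 1 then {Up, Fr, Lf} else if c = 2 then {Up, Fr, Rt}
     else if c = 3 then {Up, Bk, Lf} else if c = 4 then {Up, Bk, Rt}
     else if c = 5 then {Dn, Fr, Lf} else if c = 6 then {Dn, Fr, Rt}
     else if c = 7 then {Dn, Bk, Lf} else if c = 8 then {Dn, Bk, Rt} else {})"

definition corner_of :: "face set \<Rightarrow> nat" where
  "corner_of A =
    (if A = {Up, Fr, Lf} then 1 else if A = {Up, Fr, Rt} then 2
     else if A = {Up, Bk, Lf} then 3 else if A = {Up, Bk, Rt} then 4
     else if A = {Dn, Fr, Lf} then 5 else if A = {Dn, Fr, Rt} then 6
     else if A = {Dn, Bk, Lf} then 7 else if A = {Dn, Bk, Rt} then 8 else 0)"

text \<open>The 24 stickers: a sticker is (corner position, face it lies on).\<close>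
definition stickers :: "(nat \<times> face) set" where
  "stickers = {(c, f). c \<in> {1..8} \<and> f \<in> cfaces c}"

text \<open>Rotation of the faces of the cube by a clockwise quarter turn about the axis
  through face X, as seen from outside facing X.\<close>
fun frot :: "face \<Rightarrow> face \<Rightarrow> face" where
  "frot Up f = (case f of Fr \<Rightarrow> Lf | Lf \<Rightarrow> Bk | Bk \<Rightarrow> Rt | Rt \<Rightarrow> Fr | g \<Rightarrow> g)"
| "frot Dn f = (case f of Fr \<Rightarrow> Rt | Rt \<Rightarrow> Bk | Bk \<Rightarrow> Lf | Lf \<Rightarrow> Fr | g \<Rightarrow> g)"
| "frot Fr f = (case f of Up \<Rightarrow> Rt | Rt \<Rightarrow> Dn | Dn \<Rightarrow> Lf | Lf \<Rightarrow> Up | g \<Rightarrow> g)"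
| "frot Bk f = (case f of Up \<Rightarrow> Lf | Lf \<Rightarrow> Dn | Dn \<Rightarrow> Rt | Rt \<Rightarrow> Up | g \<Rightarrow> g)"
| "frot Lf f = (case f of Up \<Rightarrow> Fr | Fr \<Rightarrow> Dn | Dn \<Rightarrow> Bk | Bk \<Rightarrow> Up | g \<Rightarrow> g)"
| "frot Rt f = (case f of Up \<Rightarrow> Bk | Bk \<Rightarrow> Dn | Dn \<Rightarrow> Fr | Fr \<Rightarrow> Up | g \<Rightarrow> g)"

definition move :: "face \<Rightarrow> (nat \<times> face \<Rightarrow> nat \<times> face)" where
  "move Y = restrict (\<lambda>(k, s).
      if Y \<in> cfaces k then (corner_of (frot Y ` cfaces k), frot Y s) else (k, s)) stickers"

definition G2 :: "(nat \<times> face \<Rightarrow> nat \<times> face) monoid" where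
  "G2 = subgroup_generated (BijGroup stickers) (move ` UNIV)"

definition S8 :: "(nat \<Rightarrow> nat) monoid" where
  "S8 = BijGroup {1..8}"

text \<open>phi: the induced permutation of corner positions (each corner has exactly one
  Up/Dn sticker, used to track where the cubelet at position c goes).\<close>
definition ud :: "nat \<Rightarrow> face" where
  "ud c = (if c \<le> 4 then Up else Dn)"

definition phi :: "(nat \<times> face \<Rightarrow> nat \<times> face) \<Rightarrow> (nat \<Rightarrow> nat)" where
  "phi g = (\<lambda>c \<in> {1..8}. fst (g (c, ud c)))"

definition K :: "(nat \<times> face \<Rightarrow> nat \<times> face) set" where
  "K = kernel G2 S8 phi"

end

theory Submission
  imports Defs
begin

abbreviation B :: "(nat \<times> face \<Rightarrow> nat \<times> face) monoid" where "B \<equiv> BijGroup stickers"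

lemma ALL_face: "(\<forall>f::face. P f) \<longleftrightarrow> P Up \<and> P Dn \<and> P Fr \<and> P Bk \<and> P Lf \<and> P Rt"
  by (metis face.exhaust)

lemma corner_cases: "c \<in> {1..8} \<Longrightarrow> c = 1 \<or> c = 2 \<or> c = 3 \<or> c = 4 \<or> c = 5 \<or> c = 6 \<or> c = 7 \<or> c = (8::nat)"
  by auto

lemma k3_cases: "k < (3::nat) \<Longrightarrow> k = 0 \<or> k = 1 \<or> k = 2" by auto

definition cyc :: "nat \<Rightarrow> face list" where
 "cyc c = (if c = 1 then [Up,Lf,Fr] else if c = 2 then [Up,Fr,Rt] else if c = 3 then [Up,Bk,Lf]
   else if c = 4 then [Up,Rt,Bk] else if c = 5 then [Dn,Fr,Lf] else if c = 6 then [Dn,Rt,Fr]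
   else if c = 7 then [Dn,Lf,Bk] else [Dn,Bk,Rt])"

definition cf :: "nat \<Rightarrow> nat \<Rightarrow> face" where "cf c k = cyc c ! k"

definition ori :: "nat \<Rightarrow> face \<Rightarrow> nat" where
 "ori c f = (if f = cf c 0 then 0 else if f = cf c 1 then 1 else 2)"

lemma cf_mem: "c \<in> {1..8} \<Longrightarrow> k < 3 \<Longrightarrow> (c, cf c k) \<in> stickers"
  by (drule corner_cases, drule k3_cases) (auto simp: stickers_def cf_def cyc_def)

lemma ori_cf: "c \<in> {1..8} \<Longrightarrow> k < 3 \<Longrightarrow> ori c (cf c k) = k"
  by (drule corner_cases, drule k3_cases) (auto simp: ori_def cf_def cyc_def)

lemma cf0: "c \<in> {1..8} \<Longrightarrow> cf c 0 = ud c"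
  by (drule corner_cases) (auto simp: ud_def cf_def cyc_def)

lemma sticker_cases: "x \<in> stickers \<Longrightarrow> \<exists>c k. c \<in> {1..8} \<and> k < 3 \<and> x = (c, cf c k)"
proof -
  assume x: "x \<in> stickers"
  obtain c f where cf: "x = (c, f)" by fastforce
  with x have c: "c \<in> {1..8}" and f: "f \<in> cfaces c" by (auto simp: stickers_def)
  have "f = cf c (ori c f) \<and> ori c f < 3"
    using corner_cases[OF c] f by (auto simp: ori_def cf_def cyc_def)
  then show ?thesis using c cf by blast
qed

lemma stick_ext: "f \<in> extensional stickers \<Longrightarrow> g \<in> extensional stickers \<Longrightarrow>
  (\<And>c k. c \<in> {1..8} \<Longrightarrow> k < 3 \<Longrightarrow> f (c, cf c k) = g (c, cf c k)) \<Longrightarrow> f = g"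
  by (rule extensionalityI) (auto dest!: sticker_cases)

definition perm8 :: "nat list \<Rightarrow> nat \<Rightarrow> nat" where "perm8 xs c = xs ! (c - 1)"

lemma sum8: "(\<Sum>c\<in>{1..8::nat}. f c) = f 1 + f 2 + f 3 + f 4 + f 5 + f 6 + f 7 + f 8"
  by (simp add: eval_nat_numeral atLeastAtMostSuc_conv add_ac)


lemma B_carrier: "carrier B = Bij stickers" by (simp add: BijGroup_def)
lemma B_mult: "g \<in> carrier B \<Longrightarrow> h \<in> carrier B \<Longrightarrow> g \<otimes>\<^bsub>B\<^esub> h = compose stickers g h"
  by (simp add: BijGroup_def)
lemma B_one: "\<one>\<^bsub>B\<^esub> = (\<lambda>x\<in>stickers. x)" by (simp add: BijGroup_def)

lemma finite_stickers: "finite stickers"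
proof -
  have "\<And>f::face. f \<in> {Up,Dn,Fr,Bk,Lf,Rt}" by (case_tac f) auto
  then have "stickers \<subseteq> {1..8} \<times> {Up,Dn,Fr,Bk,Lf,Rt}" by (auto simp: stickers_def)
  then show ?thesis by (rule finite_subset) auto
qed

lemma finite_B: "finite (carrier B)"
proof -
  have "carrier B \<subseteq> stickers \<rightarrow>\<^sub>E stickers"
    by (auto simp: B_carrier Bij_def bij_betw_def extensional_def)
  then show ?thesis using finite_PiE[OF finite_stickers, of "\<lambda>_. stickers"] finite_stickers
    by (meson finite_subset)
qed

definition twist :: "(nat \<Rightarrow> nat) \<Rightarrow> nat \<times> face \<Rightarrow> nat \<times> face" where
 "twist t = (\<lambda>x \<in> stickers. (fst x, cf (fst x) ((ori (fst x) (snd x) + t (fst x)) mod 3)))"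

lemma twist_apply: "c \<in> {1..8} \<Longrightarrow> k < 3 \<Longrightarrow> twist t (c, cf c k) = (c, cf c ((k + t c) mod 3))"
  by (simp add: twist_def cf_mem ori_cf)

lemma twist_ext: "twist t \<in> extensional stickers" by (simp add: twist_def)

lemma twist_B: "twist t \<in> carrier B"
proof -
  have "bij_betw (twist t) stickers stickers"
  proof (rule bij_betw_byWitness[where f'="twist (\<lambda>c. 2 * t c)"])
    show "\<forall>a\<in>stickers. twist (\<lambda>c. 2 * t c) (twist t a) = a"
    proof
      fix a assume "a \<in> stickers"
      then obtain c k where c: "c \<in> {1..8}" "k < 3" "a = (c, cf c k)" by (blast dest: sticker_cases)
      have "((k + t c) mod 3 + 2 * t c) mod 3 = k" using c(2) by presburger
      then show "twist (\<lambda>c. 2 * t c) (twist t a) = a" using c by (simp add: twist_apply)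
    qed
    show "\<forall>a\<in>stickers. twist t (twist (\<lambda>c. 2 * t c) a) = a"
    proof
      fix a assume "a \<in> stickers"
      then obtain c k where c: "c \<in> {1..8}" "k < 3" "a = (c, cf c k)" by (blast dest: sticker_cases)
      have "((k + 2 * t c) mod 3 + t c) mod 3 = k" using c(2) by presburger
      then show "twist t (twist (\<lambda>c. 2 * t c) a) = a" using c by (simp add: twist_apply)
    qed
    show "twist t ` stickers \<subseteq> stickers"
      by (auto dest!: sticker_cases simp: twist_apply cf_mem)
    show "twist (\<lambda>c. 2 * t c) ` stickers \<subseteq> stickers"
      by (auto dest!: sticker_cases simp: twist_apply cf_mem)
  qed
  then show ?thesis by (simp add: B_carrier Bij_def twist_ext)
qed

lemma twist_mult: "twist t \<otimes>\<^bsub>B\<^esub> twist s = twist (\<lambda>c. s c + t c)"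
proof -
  have "compose stickers (twist t) (twist s) = twist (\<lambda>c. s c + t c)"
  proof (rule stick_ext)
    fix c k assume c: "(c::nat) \<in> {1..8}" "(k::nat) < 3"
    have "((k + s c) mod 3 + t c) mod 3 = (k + (s c + t c)) mod 3" by presburger
    then show "compose stickers (twist t) (twist s) (c, cf c k) = twist (\<lambda>c. s c + t c) (c, cf c k)"
      using c by (simp add: compose_eq cf_mem twist_apply)
  qed (auto simp: twist_ext compose_def)
  then show ?thesis by (simp add: B_mult twist_B)
qed

lemma twist_cong: "(\<And>c. c \<in> {1..8} \<Longrightarrow> t c mod 3 = s c mod 3) \<Longrightarrow> twist t = twist s"
proof (rule stick_ext)
  fix c k assume h: "\<And>c. c \<in> {1..8} \<Longrightarrow> t c mod 3 = s c mod 3" and c: "(c::nat) \<in> {1..8}" "(k::nat) < 3"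
  have "(k + t c) mod 3 = (k + s c) mod 3" using h[OF c(1)] by (metis mod_add_right_eq)
  then show "twist t (c, cf c k) = twist s (c, cf c k)" using c by (simp add: twist_apply)
qed (auto simp: twist_ext)

lemma twist_zero: "twist (\<lambda>c. 0) = \<one>\<^bsub>B\<^esub>"
  by (rule stick_ext) (auto simp: twist_ext B_one twist_apply cf_mem)

definition Pw :: "(nat \<times> face \<Rightarrow> nat \<times> face) \<Rightarrow> (nat \<Rightarrow> nat) \<Rightarrow> (nat \<Rightarrow> nat) \<Rightarrow> bool" where
 "Pw g s t \<longleftrightarrow> bij_betw s {1..8} {1..8} \<and>
    (\<forall>c\<in>{1..8}. \<forall>k<3. g (c, cf c k) = (s c, cf (s c) ((k + t c) mod 3))) \<and>
    (\<Sum>c\<in>{1..8}. t c) mod 3 = 0"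

definition P :: "(nat \<times> face \<Rightarrow> nat \<times> face) \<Rightarrow> bool" where "P g \<longleftrightarrow> (\<exists>s t. Pw g s t)"

lemma Pw_mult:
  assumes g: "Pw g sg tg" and h: "Pw h sh th" and gB: "g \<in> carrier B" and hB: "h \<in> carrier B"
  shows "Pw (g \<otimes>\<^bsub>B\<^esub> h) (sg \<circ> sh) (\<lambda>c. th c + tg (sh c))"
proof -
  have bg: "bij_betw sg {1..8} {1..8}" and bh: "bij_betw sh {1..8} {1..8}"
    using g h by (auto simp: Pw_def)
  have "(\<Sum>c\<in>{1..8}. th c + tg (sh c)) = (\<Sum>c\<in>{1..8}. th c) + (\<Sum>c\<in>{1..8}. tg (sh c))"
    by (rule sum.distrib)
  also have "(\<Sum>c\<in>{1..8}. tg (sh c)) = (\<Sum>c\<in>{1..8}. tg c)"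
    by (rule sum.reindex_bij_betw[OF bh])
  finally have eq: "(\<Sum>c\<in>{1..8}. th c + tg (sh c)) = (\<Sum>c\<in>{1..8}. th c) + (\<Sum>c\<in>{1..8}. tg c)" .
  moreover have "sum th {1..8} mod 3 = 0" "sum tg {1..8} mod 3 = 0" using g h by (auto simp: Pw_def)
  moreover have "\<And>a b::nat. a mod 3 = 0 \<Longrightarrow> b mod 3 = 0 \<Longrightarrow> (a + b) mod 3 = 0" by presburger
  ultimately have sum: "(\<Sum>c\<in>{1..8}. th c + tg (sh c)) mod 3 = 0" by simp
  have pt: "(g \<otimes>\<^bsub>B\<^esub> h) (c, cf c k) = ((sg \<circ> sh) c, cf ((sg \<circ> sh) c) ((k + (th c + tg (sh c))) mod 3))"
    if c: "c \<in> {1..8}" "k < 3" for c k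
  proof -
    have shc: "sh c \<in> {1..8}" using bh c by (auto simp: bij_betw_def)
    have "h (c, cf c k) = (sh c, cf (sh c) ((k + th c) mod 3))" using h c by (auto simp: Pw_def)
    moreover have "g (sh c, cf (sh c) ((k + th c) mod 3)) =
       (sg (sh c), cf (sg (sh c)) (((k + th c) mod 3 + tg (sh c)) mod 3))"
      using g shc by (auto simp: Pw_def)
    moreover have "((k + th c) mod 3 + tg (sh c)) mod 3 = (k + (th c + tg (sh c))) mod 3" by presburger
    ultimately show ?thesis using c by (simp add: B_mult gB hB compose_eq cf_mem)
  qed
  show ?thesis unfolding Pw_def using pt sum bij_betw_trans[OF bh bg] by auto
qed

lemma Pw_one: "Pw (\<one>\<^bsub>B\<^esub>) id (\<lambda>c. 0)"
  unfolding Pw_def by (simp add: B_one cf_mem)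

lemma P_pow: "x \<in> carrier B \<Longrightarrow> P x \<Longrightarrow> P (x [^]\<^bsub>B\<^esub> (n::nat))"
proof (induction n)
  case 0
  then show ?case using Pw_one by (auto simp: P_def)
next
  case (Suc n)
  have G: "group B" by (rule group_BijGroup)
  from Suc obtain s t where 1: "Pw (x [^]\<^bsub>B\<^esub> n) s t" by (auto simp: P_def)
  from Suc obtain s' t' where 2: "Pw x s' t'" by (auto simp: P_def)
  have "x [^]\<^bsub>B\<^esub> n \<in> carrier B" using Suc.prems G by (simp add: monoid.nat_pow_closed group.is_monoid)
  from Pw_mult[OF 1 2 this Suc.prems(1)] have "P (x [^]\<^bsub>B\<^esub> n \<otimes>\<^bsub>B\<^esub> x)" by (auto simp: P_def)
  then show ?case using G by (simp add: monoid.nat_pow_Suc group.is_monoid)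
qed

lemma P_inv: "x \<in> carrier B \<Longrightarrow> P x \<Longrightarrow> P (inv\<^bsub>B\<^esub> x)"
proof -
  assume x: "x \<in> carrier B" "P x"
  have G: "group B" by (rule group_BijGroup)
  have o: "group.ord B x \<ge> 1" using group.ord_ge_1[OF G finite_B x(1)] .
  then have o2: "Suc (group.ord B x - 1) = group.ord B x" by simp
  have "x [^]\<^bsub>B\<^esub> (group.ord B x - 1) \<otimes>\<^bsub>B\<^esub> x = x [^]\<^bsub>B\<^esub> Suc (group.ord B x - 1)"
    using G by (simp add: monoid.nat_pow_Suc group.is_monoid)
  also have "\<dots> = x [^]\<^bsub>B\<^esub> (group.ord B x)" by (simp only: o2)
  also have "\<dots> = \<one>\<^bsub>B\<^esub>" using x group.pow_ord_eq_1[OF G] by simp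
  finally have 1: "x [^]\<^bsub>B\<^esub> (group.ord B x - 1) \<otimes>\<^bsub>B\<^esub> x = \<one>\<^bsub>B\<^esub>" .
  have 2: "x [^]\<^bsub>B\<^esub> (group.ord B x - 1) \<in> carrier B"
    using x G by (simp add: monoid.nat_pow_closed group.is_monoid)
  have "inv\<^bsub>B\<^esub> x = x [^]\<^bsub>B\<^esub> (group.ord B x - 1)"
    by (rule group.inv_equality[OF G 1 x(1) 2])
  then show ?thesis using P_pow x by simp
qed

lemma Ball_8: "(\<forall>c\<in>{1..8::nat}. Q c) \<longleftrightarrow> Q 1 \<and> Q 2 \<and> Q 3 \<and> Q 4 \<and> Q 5 \<and> Q 6 \<and> Q 7 \<and> Q 8"
  apply (rule iffI)
   apply simp
  apply (intro ballI)
  apply (drule corner_cases)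
  apply auto
  done

lemma All_3: "(\<forall>k<(3::nat). Q k) \<longleftrightarrow> Q 0 \<and> Q 1 \<and> Q 2"
  by (auto dest: k3_cases)

lemma perm8_bij: "(\<forall>c\<in>{1..8}. perm8 ys (perm8 xs c) = c \<and> perm8 xs (perm8 ys c) = c \<and>
     perm8 xs c \<in> {1..8} \<and> perm8 ys c \<in> {1..8}) \<Longrightarrow> bij_betw (perm8 xs) {1..8} {1..8}"
  by (rule bij_betw_byWitness[where f'="perm8 ys"]) auto

lemma Pw_B:
  assumes g: "Pw g s t" and e: "g \<in> extensional stickers"
  shows "g \<in> carrier B"
proof -
  have bs: "bij_betw s {1..8} {1..8}" and gp: "\<And>c k. c \<in> {1..8} \<Longrightarrow> k < 3 \<Longrightarrow> g (c, cf c k) = (s c, cf (s c) ((k + t c) mod 3))"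
    using g by (auto simp: Pw_def)
  have sub: "g ` stickers \<subseteq> stickers"
  proof
    fix y assume "y \<in> g ` stickers"
    then obtain c k where c: "c \<in> {1..8}" "k < 3" "y = g (c, cf c k)" by (blast dest: sticker_cases)
    have "s c \<in> {1..8}" using bs c by (auto simp: bij_betw_def)
    then show "y \<in> stickers" using c gp cf_mem by simp
  qed
  have inj: "inj_on g stickers"
  proof (rule inj_onI)
    fix x y assume x: "x \<in> stickers" and y: "y \<in> stickers" and eq: "g x = g y"
    obtain c k where c: "c \<in> {1..8}" "k < 3" "x = (c, cf c k)" using x by (blast dest: sticker_cases)
    obtain c' k' where c': "c' \<in> {1..8}" "k' < 3" "y = (c', cf c' k')" using y by (blast dest: sticker_cases)
    have "s c = s c'" using eq c c' gp by simp
    then have cc: "c = c'" using bs c c' by (auto simp: bij_betw_def inj_on_def)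
    have "cf (s c) ((k + t c) mod 3) = cf (s c) ((k' + t c) mod 3)" using eq c c' gp cc by simp
    then have "ori (s c) (cf (s c) ((k + t c) mod 3)) = ori (s c) (cf (s c) ((k' + t c) mod 3))" by simp
    moreover have "s c \<in> {1..8}" using bs c by (auto simp: bij_betw_def)
    ultimately have "(k + t c) mod 3 = (k' + t c) mod 3" by (simp add: ori_cf)
    then have "k = k'" using c c' by presburger
    then show "x = y" using c c' cc by simp
  qed
  have "card (g ` stickers) = card stickers" using inj by (simp add: card_image)
  then have "g ` stickers = stickers" using sub finite_stickers by (simp add: card_subset_eq)
  then show ?thesis using inj e by (simp add: B_carrier Bij_def bij_betw_def)
qed

lemma move_ext: "move Y \<in> extensional stickers" by (simp add: move_def)

lemma Pw_Up: "Pw (move Up) (perm8 [3,1,4,2,5,6,7,8]) (perm8 [0,0,0,0,0,0,0,0])"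
  unfolding Pw_def
  apply (intro conjI)
    apply (rule perm8_bij[where ys="[2,4,1,3,5,6,7,8]"])
    apply (simp only: Ball_8)
    apply (simp add: perm8_def)
   apply (simp only: Ball_8 All_3)
   apply (simp add: move_def cf_def cyc_def stickers_def corner_of_def set_eq_iff ALL_face perm8_def)
  apply (simp only: sum8)
  apply (simp add: perm8_def)
  done

lemma Pw_Dn: "Pw (move Dn) (perm8 [1,2,3,4,6,8,5,7]) (perm8 [0,0,0,0,0,0,0,0])"
  unfolding Pw_def
  apply (intro conjI)
    apply (rule perm8_bij[where ys="[1,2,3,4,7,5,8,6]"])
    apply (simp only: Ball_8)
    apply (simp add: perm8_def)
   apply (simp only: Ball_8 All_3)
   apply (simp add: move_def cf_def cyc_def stickers_def corner_of_def set_eq_iff ALL_face perm8_def)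
  apply (simp only: sum8)
  apply (simp add: perm8_def)
  done

lemma Pw_Fr: "Pw (move Fr) (perm8 [2,6,3,4,1,5,7,8]) (perm8 [2,1,0,0,1,2,0,0])"
  unfolding Pw_def
  apply (intro conjI)
    apply (rule perm8_bij[where ys="[5,1,3,4,6,2,7,8]"])
    apply (simp only: Ball_8)
    apply (simp add: perm8_def)
   apply (simp only: Ball_8 All_3)
   apply (simp add: move_def cf_def cyc_def stickers_def corner_of_def set_eq_iff ALL_face perm8_def)
  apply (simp only: sum8)
  apply (simp add: perm8_def)
  done

lemma Pw_Bk: "Pw (move Bk) (perm8 [1,2,7,3,5,6,8,4]) (perm8 [0,0,1,2,0,0,2,1])"
  unfolding Pw_def
  apply (intro conjI)
    apply (rule perm8_bij[where ys="[1,2,4,8,5,6,3,7]"])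
    apply (simp only: Ball_8)
    apply (simp add: perm8_def)
   apply (simp only: Ball_8 All_3)
   apply (simp add: move_def cf_def cyc_def stickers_def corner_of_def set_eq_iff ALL_face perm8_def)
  apply (simp only: sum8)
  apply (simp add: perm8_def)
  done

lemma Pw_Lf: "Pw (move Lf) (perm8 [5,2,1,4,7,6,3,8]) (perm8 [1,0,2,0,2,0,1,0])"
  unfolding Pw_def
  apply (intro conjI)
    apply (rule perm8_bij[where ys="[3,2,7,4,1,6,5,8]"])
    apply (simp only: Ball_8)
    apply (simp add: perm8_def)
   apply (simp only: Ball_8 All_3)
   apply (simp add: move_def cf_def cyc_def stickers_def corner_of_def set_eq_iff ALL_face perm8_def)
  apply (simp only: sum8)
  apply (simp add: perm8_def)
  done

lemma Pw_Rt: "Pw (move Rt) (perm8 [1,4,3,8,5,2,7,6]) (perm8 [0,2,0,1,0,1,0,2])"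
  unfolding Pw_def
  apply (intro conjI)
    apply (rule perm8_bij[where ys="[1,6,3,2,5,8,7,4]"])
    apply (simp only: Ball_8)
    apply (simp add: perm8_def)
   apply (simp only: Ball_8 All_3)
   apply (simp add: move_def cf_def cyc_def stickers_def corner_of_def set_eq_iff ALL_face perm8_def)
  apply (simp only: sum8)
  apply (simp add: perm8_def)
  done

definition sig :: "face \<Rightarrow> nat \<Rightarrow> nat" where
 "sig Y = (case Y of Up \<Rightarrow> perm8 [3,1,4,2,5,6,7,8] | Dn \<Rightarrow> perm8 [1,2,3,4,6,8,5,7] | Fr \<Rightarrow> perm8 [2,6,3,4,1,5,7,8] | Bk \<Rightarrow> perm8 [1,2,7,3,5,6,8,4] | Lf \<Rightarrow> perm8 [5,2,1,4,7,6,3,8] | Rt \<Rightarrow> perm8 [1,4,3,8,5,2,7,6])"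

definition tw :: "face \<Rightarrow> nat \<Rightarrow> nat" where
 "tw Y = (case Y of Up \<Rightarrow> perm8 [0,0,0,0,0,0,0,0] | Dn \<Rightarrow> perm8 [0,0,0,0,0,0,0,0] | Fr \<Rightarrow> perm8 [2,1,0,0,1,2,0,0] | Bk \<Rightarrow> perm8 [0,0,1,2,0,0,2,1] | Lf \<Rightarrow> perm8 [1,0,2,0,2,0,1,0] | Rt \<Rightarrow> perm8 [0,2,0,1,0,1,0,2])"

lemma Pw_move: "Pw (move Y) (sig Y) (tw Y)"
  by (cases Y) (simp_all only: sig_def tw_def face.simps Pw_Up Pw_Dn Pw_Fr Pw_Bk Pw_Lf Pw_Rt)

lemma move_B: "move Y \<in> carrier B" by (rule Pw_B[OF Pw_move move_ext])

lemma G2_carrier: "carrier G2 = generate B (carrier B \<inter> range move)"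
  by (simp add: G2_def carrier_subgroup_generated)

lemma G2_mult: "monoid.mult G2 = monoid.mult B" by (simp add: G2_def)
lemma G2_one: "\<one>\<^bsub>G2\<^esub> = \<one>\<^bsub>B\<^esub>" by (simp add: G2_def)
lemma G2_group: "group G2" by (simp add: G2_def group.group_subgroup_generated[OF group_BijGroup])
lemma G2_sub: "carrier G2 \<subseteq> carrier B"
  unfolding G2_def by (rule group.carrier_subgroup_generated_subset[OF group_BijGroup])
lemma G2_inv: "g \<in> carrier G2 \<Longrightarrow> inv\<^bsub>G2\<^esub> g = inv\<^bsub>B\<^esub> g"
  unfolding G2_def by (rule group.inv_subgroup_generated[OF group_BijGroup]) (simp add: G2_def)

lemma move_G2: "move Y \<in> carrier G2"
  by (simp add: G2_carrier generate.incl move_B)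

lemma B_one_closed: "\<one>\<^bsub>B\<^esub> \<in> carrier B"
  by (rule monoid.one_closed[OF group.is_monoid[OF group_BijGroup]])
lemma B_m_closed: "x \<in> carrier B \<Longrightarrow> y \<in> carrier B \<Longrightarrow> x \<otimes>\<^bsub>B\<^esub> y \<in> carrier B"
  by (rule monoid.m_closed[OF group.is_monoid[OF group_BijGroup]])
lemma B_inv_closed: "x \<in> carrier B \<Longrightarrow> inv\<^bsub>B\<^esub> x \<in> carrier B"
  by (rule group.inv_closed[OF group_BijGroup])

lemma G2_P: "g \<in> carrier G2 \<Longrightarrow> g \<in> carrier B \<and> P g"
  unfolding G2_carrier
proof (induction rule: generate.induct)
  case one
  then show ?case using Pw_one B_one_closed by (auto simp: P_def)
next
  case (incl h)
  then show ?case using Pw_move by (auto simp: P_def)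
next
  case (inv h)
  then obtain Y where Y: "h = move Y" by blast
  have "P (move Y)" using Pw_move by (auto simp: P_def)
  then show ?case using P_inv[OF move_B] B_inv_closed[OF move_B] Y by simp
next
  case (eng h1 h2)
  then have c1: "h1 \<in> carrier B" "h2 \<in> carrier B" and "P h1" "P h2" by auto
  then obtain s t s' t' where a: "Pw h1 s t" and b: "Pw h2 s' t'" by (auto simp: P_def)
  show ?case using Pw_mult[OF a b c1] B_m_closed[OF c1] by (auto simp: P_def)
qed

fun wd :: "face list \<Rightarrow> nat \<times> face \<Rightarrow> nat \<times> face" where
  "wd [] = \<one>\<^bsub>B\<^esub>"
| "wd (Y # ys) = move Y \<otimes>\<^bsub>B\<^esub> wd ys"

definition sw :: "face list \<Rightarrow> nat \<Rightarrow> nat" where "sw ys = foldr (\<lambda>Y f. sig Y \<circ> f) ys id"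

lemma wd_G2: "wd ys \<in> carrier G2 \<and> (\<exists>t. Pw (wd ys) (sw ys) t)"
proof (induction ys)
  case Nil
  have "sw [] = id" by (simp add: sw_def)
  then have "Pw (wd []) (sw []) (\<lambda>c. 0)" using Pw_one by (simp only: wd.simps)
  moreover have "wd [] \<in> carrier G2"
    using monoid.one_closed[OF group.is_monoid[OF G2_group]] by (simp add: G2_one)
  ultimately show ?case by blast
next
  case (Cons Y ys)
  then obtain t where t: "Pw (wd ys) (sw ys) t" by blast
  have "wd ys \<in> carrier B" using Cons G2_sub by blast
  from Pw_mult[OF Pw_move t move_B this] have "\<exists>t. Pw (wd (Y # ys)) (sw (Y # ys)) t"
    by (auto simp: sw_def)
  moreover have "wd (Y # ys) \<in> carrier G2"
    using Cons move_G2 G2_group by (simp add: G2_mult[symmetric] group.is_monoid monoid.m_closed)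
  ultimately show ?case by blast
qed

lemma conj_twist:
  assumes g: "Pw g sg tg" and gB: "g \<in> carrier B"
    and h: "\<And>c. c \<in> {1..8} \<Longrightarrow> s (sg c) mod 3 = t c mod 3"
  shows "g \<otimes>\<^bsub>B\<^esub> twist t = twist s \<otimes>\<^bsub>B\<^esub> g"
proof -
  have ar: "\<And>k x y b. (x::nat) mod 3 = y mod 3 \<Longrightarrow> ((k + y) mod 3 + b) mod 3 = ((k + b) mod 3 + x) mod 3"
    by presburger
  have "compose stickers g (twist t) = compose stickers (twist s) g"
  proof (rule stick_ext)
    fix c k assume c: "(c::nat) \<in> {1..8}" "(k::nat) < 3"
    have sc: "sg c \<in> {1..8}" using g c by (auto simp: Pw_def bij_betw_def)
    have g1: "g (c, cf c ((k + t c) mod 3)) = (sg c, cf (sg c) (((k + t c) mod 3 + tg c) mod 3))"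
      using g c by (auto simp: Pw_def)
    have g2: "g (c, cf c k) = (sg c, cf (sg c) ((k + tg c) mod 3))"
      using g c by (auto simp: Pw_def)
    show "compose stickers g (twist t) (c, cf c k) = compose stickers (twist s) g (c, cf c k)"
      using c sc g1 g2 ar[OF h[OF c(1)]] by (simp add: compose_eq cf_mem twist_apply)
  qed (auto simp: compose_def)
  then show ?thesis using gB twist_B by (simp add: B_mult)
qed

lemma conjN:
  assumes N: "N \<lhd> G2" and gG: "g \<in> carrier G2" and g: "Pw g sg tg"
    and h: "\<And>c. c \<in> {1..8} \<Longrightarrow> s (sg c) mod 3 = t c mod 3" and tN: "twist t \<in> N"
  shows "twist s \<in> N"
proof -
  have gB: "g \<in> carrier B" using gG G2_sub by blast
  have "g \<otimes>\<^bsub>G2\<^esub> twist t \<otimes>\<^bsub>G2\<^esub> inv\<^bsub>G2\<^esub> g \<in> N"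
    using normal.inv_op_closed2[OF N gG tN] .
  then have 1: "g \<otimes>\<^bsub>B\<^esub> twist t \<otimes>\<^bsub>B\<^esub> inv\<^bsub>B\<^esub> g \<in> N" by (simp add: G2_mult G2_inv[OF gG])
  have G: "group B" by (rule group_BijGroup)
  have e: "g \<otimes>\<^bsub>B\<^esub> twist t = twist s \<otimes>\<^bsub>B\<^esub> g"
    using g gB h by (rule conj_twist)
  have "g \<otimes>\<^bsub>B\<^esub> twist t \<otimes>\<^bsub>B\<^esub> inv\<^bsub>B\<^esub> g = twist s \<otimes>\<^bsub>B\<^esub> g \<otimes>\<^bsub>B\<^esub> inv\<^bsub>B\<^esub> g"
    by (simp only: e)
  also have "\<dots> = twist s"
    using G gB twist_B by (simp add: group.inv_closed monoid.m_assoc group.is_monoid group.r_inv monoid.r_one)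
  finally show ?thesis using 1 by simp
qed


definition e :: "nat \<Rightarrow> nat \<Rightarrow> nat \<Rightarrow> nat" where
  "e a b = (\<lambda>c. if c = a then 1 else if c = b then 2 else 0)"
definition tau :: "nat \<Rightarrow> nat \<Rightarrow> nat \<Rightarrow> nat" where
  "tau a b = (\<lambda>c. if c = a then b else if c = b then a else c)"

lemma M_add: "N \<lhd> G2 \<Longrightarrow> twist t \<in> N \<Longrightarrow> twist s \<in> N \<Longrightarrow> twist (\<lambda>c. t c + s c) \<in> N"
proof -
  assume N: "N \<lhd> G2" and a: "twist t \<in> N" and b: "twist s \<in> N"
  have "twist s \<otimes>\<^bsub>G2\<^esub> twist t \<in> N" using subgroup.m_closed[OF normal_imp_subgroup[OF N] b a] .
  then show ?thesis by (simp add: G2_mult twist_mult)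
qed

lemma M_zero: "N \<lhd> G2 \<Longrightarrow> twist (\<lambda>c. 0) \<in> N"
  using subgroup.one_closed[OF normal_imp_subgroup] by (simp add: twist_zero G2_one[symmetric])

lemma M_smult: "N \<lhd> G2 \<Longrightarrow> twist v \<in> N \<Longrightarrow> twist (\<lambda>c. n * v c) \<in> N"
proof (induction n)
  case 0
  then show ?case using M_zero by simp
next
  case (Suc n)
  have "twist (\<lambda>c. n * v c + v c) \<in> N" using M_add[OF Suc.prems(1) Suc.IH[OF Suc.prems] Suc.prems(2)] .
  moreover have "(\<lambda>c. n * v c + v c) = (\<lambda>c. Suc n * v c)" by auto
  ultimately show ?case by simp
qed

lemma M_cong: "twist t \<in> N \<Longrightarrow> (\<And>c. c \<in> {1..8} \<Longrightarrow> t c mod 3 = s c mod 3) \<Longrightarrow> twist s \<in> N"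
  using twist_cong by metis

definition Tr :: "(nat \<times> face \<Rightarrow> nat \<times> face) set \<Rightarrow> nat \<Rightarrow> nat \<Rightarrow> bool" where
  "Tr N a b \<longleftrightarrow> (\<forall>t. twist t \<in> N \<longrightarrow> twist (t \<circ> tau a b) \<in> N)"

lemma Tr_word:
  assumes N: "N \<lhd> G2" and h: "\<forall>c\<in>{1..8}. tau a b (sw ys c) = c"
  shows "Tr N a b"
  unfolding Tr_def
proof (intro allI impI)
  fix t assume t: "twist t \<in> N"
  obtain tg where g: "Pw (wd ys) (sw ys) tg" and gG: "wd ys \<in> carrier G2" using wd_G2 by blast
  show "twist (t \<circ> tau a b) \<in> N"
    by (rule conjN[OF N gG g _ t]) (use h in simp)
qed

lemma flip: "N \<lhd> G2 \<Longrightarrow> twist (e b a) \<in> N \<Longrightarrow> a \<noteq> b \<Longrightarrow> twist (e a b) \<in> N"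
proof -
  assume N: "N \<lhd> G2" and h: "twist (e b a) \<in> N" and ab: "a \<noteq> b"
  have "twist (\<lambda>c. e b a c + e b a c) \<in> N" by (rule M_add[OF N h h])
  then show ?thesis by (rule M_cong) (use ab in \<open>auto simp: e_def\<close>)
qed

lemma stepA:
  assumes N: "N \<lhd> G2" and T: "Tr N a b" and ab: "a \<noteq> b" and t: "twist t \<in> N"
    and d: "t a mod 3 \<noteq> t b mod 3"
  shows "twist (e a b) \<in> N"
proof -
  have 1: "twist (t \<circ> tau a b) \<in> N" using T t by (simp add: Tr_def)
  have 2: "twist (\<lambda>c. t c + (t \<circ> tau a b) c) \<in> N" by (rule M_add[OF N t 1])
  have 3: "twist (\<lambda>c. (t c + (t \<circ> tau a b) c) + (t \<circ> tau a b) c) \<in> N" by (rule M_add[OF N 2 1])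
  have ta: "(t \<circ> tau a b) a = t b" and tb: "(t \<circ> tau a b) b = t a"
    and tc: "\<And>c. c \<noteq> a \<Longrightarrow> c \<noteq> b \<Longrightarrow> (t \<circ> tau a b) c = t c"
    using ab by (auto simp: tau_def)
  show ?thesis
  proof (cases "(t a + 2 * t b) mod 3 = 1")
    case True
    show ?thesis
    proof (rule M_cong[OF 3])
      fix c assume "(c::nat) \<in> {1..8}"
      show "(t c + (t \<circ> tau a b) c + (t \<circ> tau a b) c) mod 3 = e a b c mod 3"
      proof -
        consider "c = a" | "c = b" | "c \<noteq> a" "c \<noteq> b" by blast
        then show ?thesis
        proof cases
          case 1 then show ?thesis using True ta by (simp add: e_def) presburger
        next
          case 2 then show ?thesis using True tb ab by (simp add: e_def) presburger
        next
          case 3 then show ?thesis using tc[OF 3] by (simp add: e_def) presburger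
        qed
      qed
    qed
  next
    case False
    have F: "(t a + 2 * t b) mod 3 = 2" using False d by presburger
    have "twist (e b a) \<in> N"
    proof (rule M_cong[OF 3])
      fix c assume "(c::nat) \<in> {1..8}"
      show "(t c + (t \<circ> tau a b) c + (t \<circ> tau a b) c) mod 3 = e b a c mod 3"
      proof -
        consider "c = a" | "c = b" | "c \<noteq> a" "c \<noteq> b" by blast
        then show ?thesis
        proof cases
          case 1 then show ?thesis using F ta ab by (simp add: e_def) presburger
        next
          case 2 then show ?thesis using F tb ab by (simp add: e_def) presburger
        next
          case 3 then show ?thesis using tc[OF 3] by (simp add: e_def) presburger
        qed
      qed
    qed
    then show ?thesis by (rule flip[OF N _ ab])
  qed
qed

lemma stepB:
  assumes N: "N \<lhd> G2" and T: "Tr N b c" and h: "twist (e a b) \<in> N"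
    and ab: "a \<noteq> b" and bc: "b \<noteq> c" and ac: "a \<noteq> c"
  shows "twist (e b c) \<in> N"
proof -
  let ?u = "e a b \<circ> tau b c"
  have 1: "twist ?u \<in> N" using T h by (simp add: Tr_def)
  have 2: "twist (\<lambda>x. e a b x + ?u x) \<in> N" by (rule M_add[OF N h 1])
  have 3: "twist (\<lambda>x. (e a b x + ?u x) + ?u x) \<in> N" by (rule M_add[OF N 2 1])
  have "twist (e c b) \<in> N"
  proof (rule M_cong[OF 3])
    fix x assume "(x::nat) \<in> {1..8}"
    consider "x = a" | "x = b" | "x = c" | "x \<noteq> a" "x \<noteq> b" "x \<noteq> c" by blast
    then show "(e a b x + ?u x + ?u x) mod 3 = e c b x mod 3"
      by cases (use ab bc ac in \<open>auto simp: e_def tau_def\<close>)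
  qed
  then show ?thesis using flip[OF N] bc by blast
qed
lemma Tr_1_2: "N \<lhd> G2 \<Longrightarrow> Tr N 1 2"
  apply (erule Tr_word[where ys="[Up,Lf,Dn,Rt,Fr]"])
  apply (simp only: Ball_8)
  apply (simp add: sw_def sig_def perm8_def tau_def)
  done

lemma Tr_2_1: "N \<lhd> G2 \<Longrightarrow> Tr N 2 1"
  apply (erule Tr_word[where ys="[Up,Lf,Dn,Rt,Fr]"])
  apply (simp only: Ball_8)
  apply (simp add: sw_def sig_def perm8_def tau_def)
  done

lemma Tr_2_4: "N \<lhd> G2 \<Longrightarrow> Tr N 2 4"
  apply (erule Tr_word[where ys="[Up,Fr,Dn,Bk,Rt]"])
  apply (simp only: Ball_8)
  apply (simp add: sw_def sig_def perm8_def tau_def)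
  done

lemma Tr_4_2: "N \<lhd> G2 \<Longrightarrow> Tr N 4 2"
  apply (erule Tr_word[where ys="[Up,Fr,Dn,Bk,Rt]"])
  apply (simp only: Ball_8)
  apply (simp add: sw_def sig_def perm8_def tau_def)
  done

lemma Tr_4_3: "N \<lhd> G2 \<Longrightarrow> Tr N 4 3"
  apply (erule Tr_word[where ys="[Up,Lf,Fr,Rt,Bk]"])
  apply (simp only: Ball_8)
  apply (simp add: sw_def sig_def perm8_def tau_def)
  done

lemma Tr_3_4: "N \<lhd> G2 \<Longrightarrow> Tr N 3 4"
  apply (erule Tr_word[where ys="[Up,Lf,Fr,Rt,Bk]"])
  apply (simp only: Ball_8)
  apply (simp add: sw_def sig_def perm8_def tau_def)
  done

lemma Tr_3_7: "N \<lhd> G2 \<Longrightarrow> Tr N 3 7"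
  apply (erule Tr_word[where ys="[Fr,Lf,Dn,Bk,Rt]"])
  apply (simp only: Ball_8)
  apply (simp add: sw_def sig_def perm8_def tau_def)
  done

lemma Tr_7_3: "N \<lhd> G2 \<Longrightarrow> Tr N 7 3"
  apply (erule Tr_word[where ys="[Fr,Lf,Dn,Bk,Rt]"])
  apply (simp only: Ball_8)
  apply (simp add: sw_def sig_def perm8_def tau_def)
  done

lemma Tr_7_8: "N \<lhd> G2 \<Longrightarrow> Tr N 7 8"
  apply (erule Tr_word[where ys="[Up,Fr,Dn,Rt,Bk]"])
  apply (simp only: Ball_8)
  apply (simp add: sw_def sig_def perm8_def tau_def)
  done

lemma Tr_8_7: "N \<lhd> G2 \<Longrightarrow> Tr N 8 7"
  apply (erule Tr_word[where ys="[Up,Fr,Dn,Rt,Bk]"])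
  apply (simp only: Ball_8)
  apply (simp add: sw_def sig_def perm8_def tau_def)
  done

lemma Tr_8_6: "N \<lhd> G2 \<Longrightarrow> Tr N 8 6"
  apply (erule Tr_word[where ys="[Up,Lf,Dn,Fr,Rt]"])
  apply (simp only: Ball_8)
  apply (simp add: sw_def sig_def perm8_def tau_def)
  done

lemma Tr_6_8: "N \<lhd> G2 \<Longrightarrow> Tr N 6 8"
  apply (erule Tr_word[where ys="[Up,Lf,Dn,Fr,Rt]"])
  apply (simp only: Ball_8)
  apply (simp add: sw_def sig_def perm8_def tau_def)
  done

lemma Tr_6_5: "N \<lhd> G2 \<Longrightarrow> Tr N 6 5"
  apply (erule Tr_word[where ys="[Up,Fr,Rt,Dn,Bk]"])
  apply (simp only: Ball_8)
  apply (simp add: sw_def sig_def perm8_def tau_def)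
  done

lemma Tr_5_6: "N \<lhd> G2 \<Longrightarrow> Tr N 5 6"
  apply (erule Tr_word[where ys="[Up,Fr,Rt,Dn,Bk]"])
  apply (simp only: Ball_8)
  apply (simp add: sw_def sig_def perm8_def tau_def)
  done

lemma edges_all:
  assumes N: "N \<lhd> G2" and h: "twist (e 1 2) \<in> N \<or> twist (e 2 4) \<in> N \<or> twist (e 4 3) \<in> N \<or> twist (e 3 7) \<in> N \<or> twist (e 7 8) \<in> N \<or> twist (e 8 6) \<in> N \<or> twist (e 6 5) \<in> N"
  shows "twist (e 1 2) \<in> N \<and> twist (e 2 4) \<in> N \<and> twist (e 4 3) \<in> N \<and> twist (e 3 7) \<in> N \<and> twist (e 7 8) \<in> N \<and> twist (e 8 6) \<in> N \<and> twist (e 6 5) \<in> N"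
proof -
  have f0: "twist (e 1 2) \<in> N \<Longrightarrow> twist (e 2 4) \<in> N" by (rule stepB[OF N Tr_2_4[OF N]]) auto
  have b0: "twist (e 2 4) \<in> N \<Longrightarrow> twist (e 1 2) \<in> N"
  proof -
    assume "twist (e 2 4) \<in> N"
    then have "twist (e 4 2) \<in> N" by (rule flip[OF N]) simp
    then have "twist (e 2 1) \<in> N" by (rule stepB[OF N Tr_2_1[OF N]]) auto
    then show ?thesis by (rule flip[OF N]) simp
  qed
  have f1: "twist (e 2 4) \<in> N \<Longrightarrow> twist (e 4 3) \<in> N" by (rule stepB[OF N Tr_4_3[OF N]]) auto
  have b1: "twist (e 4 3) \<in> N \<Longrightarrow> twist (e 2 4) \<in> N"
  proof -
    assume "twist (e 4 3) \<in> N"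
    then have "twist (e 3 4) \<in> N" by (rule flip[OF N]) simp
    then have "twist (e 4 2) \<in> N" by (rule stepB[OF N Tr_4_2[OF N]]) auto
    then show ?thesis by (rule flip[OF N]) simp
  qed
  have f2: "twist (e 4 3) \<in> N \<Longrightarrow> twist (e 3 7) \<in> N" by (rule stepB[OF N Tr_3_7[OF N]]) auto
  have b2: "twist (e 3 7) \<in> N \<Longrightarrow> twist (e 4 3) \<in> N"
  proof -
    assume "twist (e 3 7) \<in> N"
    then have "twist (e 7 3) \<in> N" by (rule flip[OF N]) simp
    then have "twist (e 3 4) \<in> N" by (rule stepB[OF N Tr_3_4[OF N]]) auto
    then show ?thesis by (rule flip[OF N]) simp
  qed
  have f3: "twist (e 3 7) \<in> N \<Longrightarrow> twist (e 7 8) \<in> N" by (rule stepB[OF N Tr_7_8[OF N]]) auto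
  have b3: "twist (e 7 8) \<in> N \<Longrightarrow> twist (e 3 7) \<in> N"
  proof -
    assume "twist (e 7 8) \<in> N"
    then have "twist (e 8 7) \<in> N" by (rule flip[OF N]) simp
    then have "twist (e 7 3) \<in> N" by (rule stepB[OF N Tr_7_3[OF N]]) auto
    then show ?thesis by (rule flip[OF N]) simp
  qed
  have f4: "twist (e 7 8) \<in> N \<Longrightarrow> twist (e 8 6) \<in> N" by (rule stepB[OF N Tr_8_6[OF N]]) auto
  have b4: "twist (e 8 6) \<in> N \<Longrightarrow> twist (e 7 8) \<in> N"
  proof -
    assume "twist (e 8 6) \<in> N"
    then have "twist (e 6 8) \<in> N" by (rule flip[OF N]) simp
    then have "twist (e 8 7) \<in> N" by (rule stepB[OF N Tr_8_7[OF N]]) auto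
    then show ?thesis by (rule flip[OF N]) simp
  qed
  have f5: "twist (e 8 6) \<in> N \<Longrightarrow> twist (e 6 5) \<in> N" by (rule stepB[OF N Tr_6_5[OF N]]) auto
  have b5: "twist (e 6 5) \<in> N \<Longrightarrow> twist (e 8 6) \<in> N"
  proof -
    assume "twist (e 6 5) \<in> N"
    then have "twist (e 5 6) \<in> N" by (rule flip[OF N]) simp
    then have "twist (e 6 8) \<in> N" by (rule stepB[OF N Tr_6_8[OF N]]) auto
    then show ?thesis by (rule flip[OF N]) simp
  qed
  show ?thesis using h f0 b0 f1 b1 f2 b2 f3 b3 f4 b4 f5 b5 by blast
qed



lemma stepC:
  assumes N: "N \<lhd> G2" and all: "twist (e 1 2) \<in> N \<and> twist (e 2 4) \<in> N \<and> twist (e 4 3) \<in> N \<and> twist (e 3 7) \<in> N \<and> twist (e 7 8) \<in> N \<and> twist (e 8 6) \<in> N \<and> twist (e 6 5) \<in> N" and s: "(\<Sum>c\<in>{1..8}. t c) mod 3 = 0"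
  shows "twist t \<in> N"
proof -
  have m0: "twist (\<lambda>c. (t 1) * e 1 2 c) \<in> N" by (rule M_smult[OF N]) (use all in blast)
  have m1: "twist (\<lambda>c. (t 1 + t 2) * e 2 4 c) \<in> N" by (rule M_smult[OF N]) (use all in blast)
  have m2: "twist (\<lambda>c. (t 1 + t 2 + t 4) * e 4 3 c) \<in> N" by (rule M_smult[OF N]) (use all in blast)
  have m3: "twist (\<lambda>c. (t 1 + t 2 + t 4 + t 3) * e 3 7 c) \<in> N" by (rule M_smult[OF N]) (use all in blast)
  have m4: "twist (\<lambda>c. (t 1 + t 2 + t 4 + t 3 + t 7) * e 7 8 c) \<in> N" by (rule M_smult[OF N]) (use all in blast)
  have m5: "twist (\<lambda>c. (t 1 + t 2 + t 4 + t 3 + t 7 + t 8) * e 8 6 c) \<in> N" by (rule M_smult[OF N]) (use all in blast)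
  have m6: "twist (\<lambda>c. (t 1 + t 2 + t 4 + t 3 + t 7 + t 8 + t 6) * e 6 5 c) \<in> N" by (rule M_smult[OF N]) (use all in blast)
  obtain a1 a2 a3 a4 a5 a6 a7 :: nat where A: "a1 = t 1" "a2 = a1 + t 2" "a3 = a2 + t 4" "a4 = a3 + t 3"
    "a5 = a4 + t 7" "a6 = a5 + t 8" "a7 = a6 + t 6" by blast
  have S: "(a7 + t 5) mod 3 = 0" using s A by (simp only: sum8) (simp add: ac_simps)
  define f where "f = (\<lambda>c. a1 * e 1 2 c + a2 * e 2 4 c + a3 * e 4 3 c + a4 * e 3 7 c + a5 * e 7 8 c + a6 * e 8 6 c + a7 * e 6 5 c)"
  have q: "twist f \<in> N"
  proof -
    have m: "twist (\<lambda>c. a1 * e 1 2 c) \<in> N" "twist (\<lambda>c. a2 * e 2 4 c) \<in> N" "twist (\<lambda>c. a3 * e 4 3 c) \<in> N"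
      "twist (\<lambda>c. a4 * e 3 7 c) \<in> N" "twist (\<lambda>c. a5 * e 7 8 c) \<in> N" "twist (\<lambda>c. a6 * e 8 6 c) \<in> N"
      "twist (\<lambda>c. a7 * e 6 5 c) \<in> N"
      using all by (auto intro: M_smult[OF N])
    note q1 = M_add[OF N m(1) m(2)]
    note q2 = M_add[OF N q1 m(3)]
    note q3 = M_add[OF N q2 m(4)]
    note q4 = M_add[OF N q3 m(5)]
    note q5 = M_add[OF N q4 m(6)]
    note q6 = M_add[OF N q5 m(7)]
    show ?thesis using q6 by (simp only: f_def)
  qed
  have f1: "f 1 mod 3 = t 1 mod 3" using A by (simp add: f_def e_def)
  have f2: "f 2 mod 3 = t 2 mod 3"
  proof -
    have "f 2 = a1 * 2 + a2" by (simp add: f_def e_def)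
    then show ?thesis using A(2) by presburger
  qed
  have f4: "f 4 mod 3 = t 4 mod 3"
  proof -
    have "f 4 = a2 * 2 + a3" by (simp add: f_def e_def)
    then show ?thesis using A(3) by presburger
  qed
  have f3: "f 3 mod 3 = t 3 mod 3"
  proof -
    have "f 3 = a3 * 2 + a4" by (simp add: f_def e_def)
    then show ?thesis using A(4) by presburger
  qed
  have f7: "f 7 mod 3 = t 7 mod 3"
  proof -
    have "f 7 = a4 * 2 + a5" by (simp add: f_def e_def)
    then show ?thesis using A(5) by presburger
  qed
  have f8: "f 8 mod 3 = t 8 mod 3"
  proof -
    have "f 8 = a5 * 2 + a6" by (simp add: f_def e_def)
    then show ?thesis using A(6) by presburger
  qed
  have f6: "f 6 mod 3 = t 6 mod 3"
  proof -
    have "f 6 = a6 * 2 + a7" by (simp add: f_def e_def)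
    then show ?thesis using A(7) by presburger
  qed
  have f5: "f 5 mod 3 = t 5 mod 3"
  proof -
    have "f 5 = a7 * 2" by (simp add: f_def e_def)
    then show ?thesis using S by presburger
  qed
  show ?thesis
  proof (rule M_cong[OF q])
    fix c :: nat assume "c \<in> {1..8}"
    then show "f c mod 3 = t c mod 3"
      using f1 f2 f3 f4 f5 f6 f7 f8 by (elim corner_cases[elim_format] disjE) simp_all
  qed
qed

lemma K_twist:
  assumes k: "k \<in> K"
  shows "\<exists>t. k = twist t \<and> (\<Sum>c\<in>{1..8}. t c) mod 3 = 0"
proof -
  have kG: "k \<in> carrier G2" and ph: "phi k = \<one>\<^bsub>S8\<^esub>" using k by (auto simp: K_def kernel_def)
  have kB: "k \<in> carrier B" and "P k" using G2_P[OF kG] by auto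
  then obtain s t where w: "Pw k s t" by (auto simp: P_def)
  have kp: "\<And>c j. c \<in> {1..8} \<Longrightarrow> j < 3 \<Longrightarrow> k (c, cf c j) = (s c, cf (s c) ((j + t c) mod 3))"
    using w by (auto simp: Pw_def)
  have sc: "s c = c" if c: "c \<in> {1..8}" for c
  proof -
    have "phi k c = c" using ph c by (simp add: S8_def BijGroup_def)
    moreover have "phi k c = fst (k (c, ud c))" using c by (simp add: phi_def)
    moreover have "k (c, ud c) = (s c, cf (s c) ((0 + t c) mod 3))" using kp[OF c, of 0] cf0[OF c] by simp
    ultimately show ?thesis by simp
  qed
  have kt: "k = twist t"
  proof (rule stick_ext)
    show "k \<in> extensional stickers" using kB by (simp add: B_carrier Bij_def)
    show "twist t \<in> extensional stickers" by (rule twist_ext)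
    fix c j assume c: "(c::nat) \<in> {1..8}" "(j::nat) < 3"
    show "k (c, cf c j) = twist t (c, cf c j)" using kp[OF c] sc[OF c(1)] twist_apply[OF c] by simp
  qed
  have st: "(\<Sum>c\<in>{1..8}. t c) mod 3 = 0" using w by (simp add: Pw_def)
  show ?thesis
  proof (intro exI[of _ t] conjI)
    show "k = twist t" by (rule kt)
    show "(\<Sum>c\<in>{1..8}. t c) mod 3 = 0" by (rule st)
  qed
qed

theorem proposition2p7:
  assumes "N \<lhd> G2"
    and "N \<noteq> {\<one>\<^bsub>G2\<^esub>}"
    and "phi ` N = {\<one>\<^bsub>S8\<^esub>}"
  shows "N = K"
proof
  note N = assms(1)
  have sub: "subgroup N G2" by (rule normal_imp_subgroup[OF N])
  show NK: "N \<subseteq> K"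
  proof
    fix n assume n: "n \<in> N"
    have "n \<in> carrier G2" using subgroup.subset[OF sub] n by blast
    moreover have "phi n = \<one>\<^bsub>S8\<^esub>"
    proof -
      have "phi n \<in> phi ` N" using n by (rule imageI)
      then show ?thesis using assms(3) by simp
    qed
    ultimately show "n \<in> K" by (simp add: K_def kernel_def)
  qed
  have "\<exists>n\<in>N. n \<noteq> \<one>\<^bsub>G2\<^esub>"
  proof (rule ccontr)
    assume "\<not> ?thesis"
    then have "N \<subseteq> {\<one>\<^bsub>G2\<^esub>}" by auto
    moreover have "\<one>\<^bsub>G2\<^esub> \<in> N" by (rule subgroup.one_closed[OF sub])
    ultimately have "N = {\<one>\<^bsub>G2\<^esub>}" by auto
    with assms(2) show False by simp
  qed
  then obtain n where n: "n \<in> N" "n \<noteq> \<one>\<^bsub>G2\<^esub>" by blast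
  have nK: "n \<in> K" using NK n(1) by (rule subsetD)
  obtain t where tt: "n = twist t \<and> (\<Sum>c\<in>{1..8}. t c) mod 3 = 0"
    using K_twist[OF nK] ..
  have t: "n = twist t" and ts: "(\<Sum>c\<in>{1..8}. t c) mod 3 = 0" using tt by simp_all
  have S: "(t 1 + t 2 + t 3 + t 4 + t 5 + t 6 + t 7 + t 8) mod 3 = 0" using ts by (simp only: sum8)
  have tN: "twist t \<in> N" using n t by simp
  have "t 1 mod 3 \<noteq> t 2 mod 3 \<or> t 2 mod 3 \<noteq> t 4 mod 3 \<or> t 4 mod 3 \<noteq> t 3 mod 3 \<or> t 3 mod 3 \<noteq> t 7 mod 3 \<or>
        t 7 mod 3 \<noteq> t 8 mod 3 \<or> t 8 mod 3 \<noteq> t 6 mod 3 \<or> t 6 mod 3 \<noteq> t 5 mod 3"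
  proof (rule ccontr)
    assume "\<not> ?thesis"
    then have eqs: "t 1 mod 3 = t 2 mod 3" "t 2 mod 3 = t 4 mod 3" "t 4 mod 3 = t 3 mod 3" "t 3 mod 3 = t 7 mod 3"
        "t 7 mod 3 = t 8 mod 3" "t 8 mod 3 = t 6 mod 3" "t 6 mod 3 = t 5 mod 3" by blast+
    define r where "r = t 5 mod 3"
    have e': "t c mod 3 = r" if "c \<in> {1..8}" for c
      using corner_cases[OF that] eqs unfolding r_def by (elim disjE) simp_all
    have stp: "(A + x) mod 3 = (B + r) mod 3" if A: "A mod 3 = B mod 3" and x: "x mod 3 = r" for A B x :: nat
    proof -
      have xr: "x mod 3 = r mod 3" using x by simp
      show ?thesis by (metis mod_add_eq A xr)
    qed
    have "t 1 mod 3 = r mod 3" using e'[of 1] by simp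
    then have "(t 1 + t 2) mod 3 = (r + r) mod 3" by (rule stp) (rule e', simp)
    then have "(t 1 + t 2 + t 3) mod 3 = (r + r + r) mod 3" by (rule stp) (rule e', simp)
    then have "(t 1 + t 2 + t 3 + t 4) mod 3 = (r + r + r + r) mod 3" by (rule stp) (rule e', simp)
    then have "(t 1 + t 2 + t 3 + t 4 + t 5) mod 3 = (r + r + r + r + r) mod 3" by (rule stp) (rule e', simp)
    then have "(t 1 + t 2 + t 3 + t 4 + t 5 + t 6) mod 3 = (r + r + r + r + r + r) mod 3" by (rule stp) (rule e', simp)
    then have "(t 1 + t 2 + t 3 + t 4 + t 5 + t 6 + t 7) mod 3 = (r + r + r + r + r + r + r) mod 3" by (rule stp) (rule e', simp)
    then have "(t 1 + t 2 + t 3 + t 4 + t 5 + t 6 + t 7 + t 8) mod 3 = (r + r + r + r + r + r + r + r) mod 3" by (rule stp) (rule e', simp)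
    then have r8: "(r + r + r + r + r + r + r + r) mod 3 = 0" using S by simp
    have "r < 3" by (simp add: r_def)
    then have "r = 0 \<or> r = 1 \<or> r = 2" by (rule k3_cases)
    then have r0: "r = 0" using r8 by (elim disjE) simp_all
    have z: "t c mod 3 = 0 mod 3" if "c \<in> {1..8}" for c using e'[OF that] r0 by simp
    have "twist t = twist (\<lambda>c. 0)" by (rule twist_cong) (use z in simp)
    then have "n = \<one>\<^bsub>G2\<^esub>" using t by (simp add: twist_zero G2_one)
    then show False using n(2) by simp
  qed
  moreover have neq: "(1::nat) \<noteq> 2" "(2::nat) \<noteq> 4" "(4::nat) \<noteq> 3" "(3::nat) \<noteq> 7" "(7::nat) \<noteq> 8"
    "(8::nat) \<noteq> 6" "(6::nat) \<noteq> 5" by simp_all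
  ultimately have "twist (e 1 2) \<in> N \<or> twist (e 2 4) \<in> N \<or> twist (e 4 3) \<in> N \<or> twist (e 3 7) \<in> N \<or>
      twist (e 7 8) \<in> N \<or> twist (e 8 6) \<in> N \<or> twist (e 6 5) \<in> N"
  proof (elim disjE)
    assume d: "t 1 mod 3 \<noteq> t 2 mod 3"
    show ?thesis using stepA[OF N Tr_1_2[OF N] neq(1) tN d] by simp
  next
    assume d: "t 2 mod 3 \<noteq> t 4 mod 3"
    show ?thesis using stepA[OF N Tr_2_4[OF N] neq(2) tN d] by simp
  next
    assume d: "t 4 mod 3 \<noteq> t 3 mod 3"
    show ?thesis using stepA[OF N Tr_4_3[OF N] neq(3) tN d] by simp
  next
    assume d: "t 3 mod 3 \<noteq> t 7 mod 3"
    show ?thesis using stepA[OF N Tr_3_7[OF N] neq(4) tN d] by simp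
  next
    assume d: "t 7 mod 3 \<noteq> t 8 mod 3"
    show ?thesis using stepA[OF N Tr_7_8[OF N] neq(5) tN d] by simp
  next
    assume d: "t 8 mod 3 \<noteq> t 6 mod 3"
    show ?thesis using stepA[OF N Tr_8_6[OF N] neq(6) tN d] by simp
  next
    assume d: "t 6 mod 3 \<noteq> t 5 mod 3"
    show ?thesis using stepA[OF N Tr_6_5[OF N] neq(7) tN d] by simp
  qed
  then have all: "twist (e 1 2) \<in> N \<and> twist (e 2 4) \<in> N \<and> twist (e 4 3) \<in> N \<and> twist (e 3 7) \<in> N \<and>
      twist (e 7 8) \<in> N \<and> twist (e 8 6) \<in> N \<and> twist (e 6 5) \<in> N"
    by (rule edges_all[OF N])
  show "K \<subseteq> N"
  proof
    fix k assume kK: "k \<in> K"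
    obtain s where ss: "k = twist s \<and> (\<Sum>c\<in>{1..8}. s c) mod 3 = 0"
      using K_twist[OF kK] ..
    have "twist s \<in> N" using stepC[OF N all] ss by simp
    then show "k \<in> N" using ss by simp
  qed
qed

end
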